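(* Assume $V=L$. Let $\xi\in\Xi$, $X\in\mathrm{IPS}_\xi$, let $F:D^\xi\to\mathcal N$ be continuous, and let $\mathcal U\subseteq\bigcup_{i\in T}\mathrm{IPS}_{[\subseteq i]}$ be a countable set. Then there is $Y\in\mathrm{IPS}_\xi$ with $Y\subseteq X$ such that the image $S=F[Y]$ is $U$-avoidable on $i$ for every $i\in T$ and every $U\in\mathrm{IPS}_{[\subseteq i]}\cap\mathcal U$.
   Context: $\mathcal N=\omega^\omega$, $D=2^\omega$. $T$ is the set of all nonempty finite sequences of countable ordinals, ordered by strict extension $\subset$; $[\subseteq i]=\{j\in T:j\subseteq i\}$, $[\subset i]=\{j\in T:j\subset i\}$. $\Xi$ is the set of all at most countable $\xi\subseteq T$ closed downward under $\subset$. $D^\xi$ is the product of $\xi$ copies of $D$ with the product topology ($D^\varnothing=\{\varnothing\}$); for $\eta\subseteq\xi$, $x\restriction\eta$ is restriction and $X\restriction\eta=\{x\restriction\eta:x\in X\}$. For $\zeta\in\Xi$, $\mathrm{IPS}_\zeta$ is the set of all $X\subseteq D^\zeta$ for which there is a homeomorphism $H$ of $D^\zeta$ onto $X$ such that for all $x_0,x_1\in D^\zeta$ and all $\eta\in\Xi$, $\eta\subseteq\zeta$: $x_0\restriction\eta=x_1\restriction\eta\iff H(x_0)\restriction\eta=H(x_1)\restriction\eta$. For $V\subseteq D^\zeta$ and $i\in\zeta$, $V{\Downarrow}i=\{v(i):v\in V\}$. For $i\in T$ and $U\in\mathrm{IPS}_{[\subseteq i]}$, a set $S\subseteq\mathcal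 N$ is $U$-avoidable on $i$ if there is a set $V\subseteq U$, clopen relative to $U$, with $V\restriction[\subset i]=U\restriction[\subset i]$ and $S\cap(V{\Downarrow}i)=\varnothing$. *)

theory Defs
  imports "HOL-Analysis.Analysis" "HOL-Library.Sublist"
begin

definition cantor_top :: "(nat \<Rightarrow> bool) topology" where
  "cantor_top = product_topology (\<lambda>_. discrete_topology UNIV) UNIV"

definition baire_top :: "(nat \<Rightarrow> nat) topology" where
  "baire_top = product_topology (\<lambda>_. discrete_topology UNIV) UNIV"

text \<open>Nodes are nonempty finite sequences of labels of type 'o (in the theorem, 'o is
  a well-ordered type of order type omega_1, i.e. the countable ordinals).\<close>
definition Tnodes :: "'o list set" where
  "Tnodes = {s. s \<noteq> []}"

definition below_eq :: "'o list \<Rightarrow> 'o list set" where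
  "below_eq i = {j \<in> Tnodes. prefix j i}"

definition below :: "'o list \<Rightarrow> 'o list set" where
  "below i = {j \<in> Tnodes. strict_prefix j i}"

definition Xi :: "'o list set set" where
  "Xi = {\<xi>. \<xi> \<subseteq> Tnodes \<and> countable \<xi> \<and>
             (\<forall>i\<in>\<xi>. \<forall>j\<in>Tnodes. strict_prefix j i \<longrightarrow> j \<in> \<xi>)}"

definition Dpow :: "'o list set \<Rightarrow> ('o list \<Rightarrow> nat \<Rightarrow> bool) topology" where
  "Dpow \<zeta> = product_topology (\<lambda>_. cantor_top) \<zeta>"

definition IPS :: "'o list set \<Rightarrow> ('o list \<Rightarrow> nat \<Rightarrow> bool) set set" where
  "IPS \<zeta> = {X. X \<subseteq> topspace (Dpow \<zeta>) \<and>
     (\<exists>H. homeomorphic_map (Dpow \<zeta>) (subtopology (Dpow \<zeta>) X) H \<and>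
          (\<forall>x0\<in>topspace (Dpow \<zeta>). \<forall>x1\<in>topspace (Dpow \<zeta>). \<forall>\<eta>\<in>Xi. \<eta> \<subseteq> \<zeta> \<longrightarrow>
             (restrict x0 \<eta> = restrict x1 \<eta> \<longleftrightarrow> restrict (H x0) \<eta> = restrict (H x1) \<eta>)))}"

text \<open>V Downarrow i, viewed inside the Baire space via the standard inclusion 2^omega \<subseteq> omega^omega.\<close>
definition proj_at :: "('o list \<Rightarrow> nat \<Rightarrow> bool) set \<Rightarrow> 'o list \<Rightarrow> (nat \<Rightarrow> nat) set" where
  "proj_at V i = (\<lambda>v. \<lambda>n. of_bool (v i n)) ` V"

definition avoidable ::
  "(nat \<Rightarrow> nat) set \<Rightarrow> ('o list \<Rightarrow> nat \<Rightarrow> bool) set \<Rightarrow> 'o list \<Rightarrow> bool" where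
  "avoidable S U i \<longleftrightarrow>
     (\<exists>V. V \<subseteq> U \<and> openin (subtopology (Dpow (below_eq i)) U) V
          \<and> closedin (subtopology (Dpow (below_eq i)) U) V
          \<and> (\<lambda>v. restrict v (below i)) ` V = (\<lambda>u. restrict u (below i)) ` U
          \<and> S \<inter> proj_at V i = {})"

end

theory Submission
  imports Defs
begin

lemma topspace_cantor[simp]: "topspace cantor_top = UNIV"
  by (auto simp: cantor_top_def)

lemma topspace_baire[simp]: "topspace baire_top = UNIV"
  by (auto simp: baire_top_def)

lemma topspace_Dpow: "topspace (Dpow \<zeta>) = PiE \<zeta> (\<lambda>_. UNIV)"
  by (simp add: Dpow_def)

lemma compact_cantor: "compact_space cantor_top"
  unfolding cantor_top_def
  by (simp add: compact_space_product_topology compact_space_discrete_topology)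

lemma compact_Dpow: "compact_space (Dpow \<zeta>)"
  unfolding Dpow_def
  by (simp add: compact_space_product_topology compact_cantor)

lemma Hausdorff_Dpow: "Hausdorff_space (Dpow \<zeta>)"
  unfolding Dpow_def cantor_top_def
  by (simp add: Hausdorff_space_product_topology)

lemma cont_cantor_bit: "continuous_map cantor_top (discrete_topology UNIV) (\<lambda>y. y n)"
  unfolding cantor_top_def by (rule continuous_map_product_projection) simp

lemma cont_baire_bit: "continuous_map baire_top (discrete_topology UNIV) (\<lambda>y. y n)"
  unfolding baire_top_def by (rule continuous_map_product_projection) simp

lemma cont_Dpow_proj: "j \<in> \<zeta> \<Longrightarrow> continuous_map (Dpow \<zeta>) cantor_top (\<lambda>x. x j)"
  unfolding Dpow_def by (rule continuous_map_product_projection)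

lemma cont_Dpow_bit: "j \<in> \<zeta> \<Longrightarrow> continuous_map (Dpow \<zeta>) (discrete_topology UNIV) (\<lambda>x. x j n)"
  using continuous_map_compose[OF cont_Dpow_proj cont_cantor_bit] by (simp add: o_def)

lemma open_agree:
  assumes "finite I" "\<forall>k\<in>I. continuous_map X (discrete_topology UNIV) (g k)"
  shows "openin X {x' \<in> topspace X. \<forall>k\<in>I. g k x' = g k x}"
  using assms
proof (induction I rule: finite_induct)
  case empty
  then show ?case by simp
next
  case (insert a F)
  have "openin X {x' \<in> topspace X. g a x' \<in> {g a x}}"
    by (rule openin_continuous_map_preimage) (use insert in auto)
  moreover have "openin X {x' \<in> topspace X. \<forall>k\<in>F. g k x' = g k x}"
    using insert by auto
  ultimately have "openin X ({x' \<in> topspace X. g a x' \<in> {g a x}} \<inter> {x' \<in> topspace X. \<forall>k\<in>F. g k x' = g k x})"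
    by (rule openin_Int)
  moreover have "{x' \<in> topspace X. g a x' \<in> {g a x}} \<inter> {x' \<in> topspace X. \<forall>k\<in>F. g k x' = g k x}
     = {x' \<in> topspace X. \<forall>k\<in>insert a F. g k x' = g k x}" by auto
  ultimately show ?case by simp
qed

lemma compact_uniform:
  assumes "compact_space X" "\<And>m. openin X (Op m)" "\<And>m. Op m \<subseteq> Op (Suc m)"
    "\<And>x. x \<in> topspace X \<Longrightarrow> \<exists>m. x \<in> Op m"
  shows "\<exists>m. topspace X \<subseteq> Op m"
proof -
  have mono: "Op m \<subseteq> Op m'" if "m \<le> m'" for m m'
    using that by (induction rule: dec_induct) (use assms(3) in auto)
  have "compactin X (topspace X)" using assms(1) by (simp add: compact_space_def)
  moreover have "\<forall>B\<in>range Op. openin X B" using assms(2) by auto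
  moreover have "topspace X \<subseteq> \<Union>(range Op)" using assms(4) by auto
  ultimately obtain F where F: "finite F" "F \<subseteq> range Op" "topspace X \<subseteq> \<Union>F"
    unfolding compactin_def by meson
  obtain N where N: "finite N" "F = Op ` N"
    using F finite_subset_image by metis
  have "topspace X \<subseteq> Op (Max (insert 0 N))"
  proof
    fix x assume "x \<in> topspace X"
    then obtain n where "n \<in> N" "x \<in> Op n" using F N by auto
    then show "x \<in> Op (Max (insert 0 N))" using mono[of n "Max (insert 0 N)"] N by auto
  qed
  then show ?thesis by blast
qed

lemma cantor_nbhd:
  assumes "openin cantor_top W" "y \<in> W"
  shows "\<exists>B. \<forall>y'. (\<forall>b\<le>B. y' b = y b) \<longrightarrow> y' \<in> W"
proof -
  obtain U where U: "finite {i. U i \<noteq> UNIV}" "y \<in> PiE UNIV U" "PiE UNIV U \<subseteq> W"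
    using assms(1)[unfolded cantor_top_def, THEN openin_product_topology_alt[THEN iffD1], rule_format, OF assms(2)]
    by auto
  define B where "B = Max (insert 0 {i. U i \<noteq> UNIV})"
  have "y' \<in> W" if "\<forall>b\<le>B. y' b = y b" for y'
  proof -
    have "y' b \<in> U b" for b
    proof (cases "U b = UNIV")
      case False
      then have "b \<le> B" unfolding B_def using U(1) by simp
      then show ?thesis using that U(2) by auto
    qed simp
    then have "y' \<in> PiE UNIV U" by auto
    then show ?thesis using U(3) by auto
  qed
  then show ?thesis by blast
qed

lemma Dpow_nbhd:
  assumes "openin (Dpow \<zeta>) S" "x \<in> S"
  shows "\<exists>J B. finite J \<and> J \<subseteq> \<zeta> \<and> (\<forall>x'\<in>topspace (Dpow \<zeta>). (\<forall>j\<in>J. \<forall>b\<le>B. x' j b = x j b) \<longrightarrow> x' \<in> S)"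
proof -
  obtain U where U: "finite {i \<in> \<zeta>. U i \<noteq> UNIV}" "\<forall>i\<in>\<zeta>. openin cantor_top (U i)"
     "x \<in> PiE \<zeta> U" "PiE \<zeta> U \<subseteq> S"
    using assms(1)[unfolded Dpow_def, THEN openin_product_topology_alt[THEN iffD1], rule_format, OF assms(2)]
    by auto
  define J where "J = {i \<in> \<zeta>. U i \<noteq> UNIV}"
  have "\<forall>j\<in>J. \<exists>B. \<forall>y'. (\<forall>b\<le>B. y' b = x j b) \<longrightarrow> y' \<in> U j"
    using cantor_nbhd U(2,3) unfolding J_def by (auto simp: PiE_iff)
  then obtain Bf where Bf: "\<forall>j\<in>J. \<forall>y'. (\<forall>b\<le>Bf j. y' b = x j b) \<longrightarrow> y' \<in> U j"
    by metis
  define B where "B = Max (insert 0 (Bf ` J))"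
  have fJ: "finite J" using U(1) J_def by simp
  have "x' \<in> S" if x': "x' \<in> topspace (Dpow \<zeta>)" "\<forall>j\<in>J. \<forall>b\<le>B. x' j b = x j b" for x'
  proof -
    have "x' j \<in> U j" if "j \<in> \<zeta>" for j
    proof (cases "j \<in> J")
      case True
      have "Bf j \<le> B" unfolding B_def using fJ True by simp
      then show ?thesis using Bf True x'(2) by auto
    next
      case False
      then show ?thesis using that J_def by auto
    qed
    moreover have "x' \<in> extensional \<zeta>" using x'(1) by (simp add: topspace_Dpow PiE_iff)
    ultimately have "x' \<in> PiE \<zeta> U" by (auto simp: PiE_iff)
    then show ?thesis using U(4) by auto
  qed
  then show ?thesis using fJ J_def by blast
qed

lemma uniform_Dpow:
  fixes L :: nat
  assumes "countable \<zeta>" "\<And>n. continuous_map (Dpow \<zeta>) (discrete_topology UNIV) (\<lambda>x. f x n)"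
  shows "\<exists>B. \<forall>x\<in>topspace (Dpow \<zeta>). \<forall>x'\<in>topspace (Dpow \<zeta>).
            (\<forall>j\<in>\<zeta>. \<forall>b\<le>B. x' j b = x j b) \<longrightarrow> (\<forall>n<L. f x' n = f x n)"
proof -
  define Jn where "Jn n = (if \<zeta> = {} then {} else from_nat_into \<zeta> ` {..<n})" for n
  have Jn_sub: "Jn n \<subseteq> \<zeta>" for n
    unfolding Jn_def by (auto intro: from_nat_into)
  have Jn_fin: "finite (Jn n)" for n unfolding Jn_def by auto
  have Jn_mono: "Jn n \<subseteq> Jn (Suc n)" for n unfolding Jn_def by auto
  define Op where "Op n = {x\<in>topspace (Dpow \<zeta>). \<forall>x'\<in>topspace (Dpow \<zeta>).
       (\<forall>j\<in>Jn n. \<forall>b\<le>n. x' j b = x j b) \<longrightarrow> (\<forall>k<L. f x' k = f x k)}" for n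
  have "\<exists>m. topspace (Dpow \<zeta>) \<subseteq> Op m"
  proof (rule compact_uniform[OF compact_Dpow])
    fix m
    show "openin (Dpow \<zeta>) (Op m)"
    proof (subst openin_subopen, intro ballI)
      fix x assume x: "x \<in> Op m"
      define T where "T = {x'' \<in> topspace (Dpow \<zeta>). \<forall>k\<in>Jn m \<times> {..m}. (\<lambda>k x. x (fst k) (snd k)) k x'' = (\<lambda>k x. x (fst k) (snd k)) k x}"
      have Topen: "openin (Dpow \<zeta>) T" unfolding T_def
        by (rule open_agree) (use Jn_fin Jn_sub in \<open>auto intro!: cont_Dpow_bit\<close>)
      have xx: "x \<in> topspace (Dpow \<zeta>) \<and> (\<forall>x'\<in>topspace (Dpow \<zeta>). (\<forall>j\<in>Jn m. \<forall>b\<le>m. x' j b = x j b) \<longrightarrow> (\<forall>k<L. f x' k = f x k))"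
        using x unfolding Op_def by (rule CollectD)
      have xtop: "x \<in> topspace (Dpow \<zeta>)" using xx by (rule conjunct1)
      have xOp: "\<forall>x'\<in>topspace (Dpow \<zeta>). (\<forall>j\<in>Jn m. \<forall>b\<le>m. x' j b = x j b) \<longrightarrow> (\<forall>k<L. f x' k = f x k)"
        using xx by (rule conjunct2)
      have xT: "x \<in> T" using xtop unfolding T_def by simp
      have TOp: "T \<subseteq> Op m"
      proof
        fix x'' assume x'': "x'' \<in> T"
        have x''top: "x'' \<in> topspace (Dpow \<zeta>)" using x'' unfolding T_def by simp
        have agree: "\<forall>j\<in>Jn m. \<forall>b\<le>m. x'' j b = x j b" using x'' unfolding T_def by simp
        have fx'': "\<forall>k<L. f x'' k = f x k" using xOp x''top agree by blast
        have "\<forall>k<L. f x' k = f x'' k" if "x' \<in> topspace (Dpow \<zeta>)" "\<forall>j\<in>Jn m. \<forall>b\<le>m. x' j b = x'' j b" for x'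
        proof -
          have "\<forall>j\<in>Jn m. \<forall>b\<le>m. x' j b = x j b" using that(2) agree by simp
          then have "\<forall>k<L. f x' k = f x k" using xOp that(1) by blast
          then show ?thesis using fx'' by simp
        qed
        then show "x'' \<in> Op m" using x''top unfolding Op_def by blast
      qed
      show "\<exists>T. openin (Dpow \<zeta>) T \<and> x \<in> T \<and> T \<subseteq> Op m" using Topen xT TOp by blast
    qed
  next
    fix m show "Op m \<subseteq> Op (Suc m)"
      unfolding Op_def using Jn_mono by fastforce
  next
    fix x assume x: "x \<in> topspace (Dpow \<zeta>)"
    define S where "S = {x' \<in> topspace (Dpow \<zeta>). \<forall>k\<in>{..<L}. f x' k = f x k}"
    have "openin (Dpow \<zeta>) S" unfolding S_def
      by (rule open_agree) (use assms(2) in auto)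
    moreover have "x \<in> S" using x S_def by auto
    ultimately obtain J B where JB: "finite J" "J \<subseteq> \<zeta>"
      "\<forall>x'\<in>topspace (Dpow \<zeta>). (\<forall>j\<in>J. \<forall>b\<le>B. x' j b = x j b) \<longrightarrow> x' \<in> S"
      using Dpow_nbhd by metis
    define n where "n = max B (Suc (Max (insert 0 (to_nat_on \<zeta> ` J))))"
    have "J \<subseteq> Jn n"
    proof
      fix j assume j: "j \<in> J"
      then have "to_nat_on \<zeta> j < n" unfolding n_def using JB(1)
        by (simp add: le_imp_less_Suc less_max_iff_disj)
      moreover have "from_nat_into \<zeta> (to_nat_on \<zeta> j) = j" using j JB(2) assms(1) by auto
      ultimately show "j \<in> Jn n" unfolding Jn_def using j JB(2) by force
    qed
    moreover have "B \<le> n" unfolding n_def by simp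
    ultimately have "x \<in> Op n" using JB(3) x unfolding Op_def S_def by fastforce
    then show "\<exists>m. x \<in> Op m" by blast
  qed
  then obtain m where m: "topspace (Dpow \<zeta>) \<subseteq> Op m" by blast
  show ?thesis
  proof (intro exI[of _ m] ballI impI)
    fix x x' assume "x \<in> topspace (Dpow \<zeta>)" "x' \<in> topspace (Dpow \<zeta>)" "\<forall>j\<in>\<zeta>. \<forall>b\<le>m. x' j b = x j b"
    then show "\<forall>n<L. f x' n = f x n" using m Jn_sub unfolding Op_def by blast
  qed
qed

lemma below_eq_Xi: "i \<in> Tnodes \<Longrightarrow> below_eq i \<in> Xi"
proof -
  have "below_eq i \<subseteq> set (prefixes i)" unfolding below_eq_def by auto
  then have "countable (below_eq i)" by (meson countable_finite finite_set finite_subset)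
  then show ?thesis unfolding Xi_def below_eq_def
    by (auto dest: prefix_order.less_imp_le intro: prefix_order.order_trans)
qed

lemma below_Xi: "i \<in> Tnodes \<Longrightarrow> below i \<in> Xi"
proof -
  have "below i \<subseteq> set (prefixes i)" unfolding below_def by auto
  then have "countable (below i)" by (meson countable_finite finite_set finite_subset)
  then show ?thesis unfolding Xi_def below_def
    by (auto intro: prefix_order.less_trans)
qed

lemma below_eq_insert: "i \<in> Tnodes \<Longrightarrow> below_eq i = insert i (below i)"
  unfolding below_eq_def below_def by (auto simp: strict_prefix_def)

lemma i_notin_below: "i \<notin> below i"
  unfolding below_def by auto

lemma cont_upd:
  assumes "i \<in> \<zeta>"
  shows "continuous_map (Dpow \<zeta>) (Dpow \<zeta>) (\<lambda>x. x(i := y))"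
  unfolding Dpow_def continuous_map_componentwise
proof (intro conjI ballI)
  show "(\<lambda>x. x(i := y)) ` topspace (product_topology (\<lambda>_. cantor_top) \<zeta>) \<subseteq> extensional \<zeta>"
    using assms by (auto simp: PiE_iff extensional_def)
next
  fix k assume k: "k \<in> \<zeta>"
  show "continuous_map (product_topology (\<lambda>_. cantor_top) \<zeta>) cantor_top (\<lambda>x. (x(i := y)) k)"
  proof (cases "k = i")
    case True
    then show ?thesis by simp
  next
    case False
    then show ?thesis using continuous_map_product_projection[OF k] by simp
  qed
qed

lemma IPS_D:
  assumes "U \<in> IPS \<zeta>"
  obtains H where "homeomorphic_map (Dpow \<zeta>) (subtopology (Dpow \<zeta>) U) H"
    "\<And>x0 x1 \<eta>. x0 \<in> topspace (Dpow \<zeta>) \<Longrightarrow> x1 \<in> topspace (Dpow \<zeta>) \<Longrightarrow> \<eta> \<in> Xi \<Longrightarrow> \<eta> \<subseteq> \<zeta> \<Longrightarrow>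
       (restrict x0 \<eta> = restrict x1 \<eta> \<longleftrightarrow> restrict (H x0) \<eta> = restrict (H x1) \<eta>)"
    "continuous_map (Dpow \<zeta>) (Dpow \<zeta>) H" "H ` topspace (Dpow \<zeta>) = U" "U \<subseteq> topspace (Dpow \<zeta>)"
proof -
  obtain H where H: "homeomorphic_map (Dpow \<zeta>) (subtopology (Dpow \<zeta>) U) H"
    "\<forall>x0\<in>topspace (Dpow \<zeta>). \<forall>x1\<in>topspace (Dpow \<zeta>). \<forall>\<eta>\<in>Xi. \<eta> \<subseteq> \<zeta> \<longrightarrow>
             (restrict x0 \<eta> = restrict x1 \<eta> \<longleftrightarrow> restrict (H x0) \<eta> = restrict (H x1) \<eta>)"
    and sub: "U \<subseteq> topspace (Dpow \<zeta>)"
    using assms unfolding IPS_def by blast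
  have c: "continuous_map (Dpow \<zeta>) (subtopology (Dpow \<zeta>) U) H"
    using H(1) by (rule homeomorphic_imp_continuous_map)
  have "continuous_map (Dpow \<zeta>) (Dpow \<zeta>) H"
    using c by (simp add: continuous_map_in_subtopology)
  moreover have "H ` topspace (Dpow \<zeta>) = U"
    using homeomorphic_imp_surjective_map[OF H(1)] sub by (simp add: Int_absorb1)
  ultimately show ?thesis using that H sub by blast
qed

lemma fiber_lemma:
  assumes i: "i \<in> Tnodes" and U: "U \<in> IPS (below_eq i)"
  shows "\<exists>m. \<forall>u\<in>U. \<forall>Q. finite Q \<and> card Q \<le> N \<longrightarrow>
     (\<exists>v\<in>U. restrict v (below i) = restrict u (below i) \<and> map (\<lambda>n. of_bool (v i n)::nat) [0..<m] \<notin> Q)"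
proof -
  define \<zeta> where "\<zeta> = below_eq i"
  obtain H where Hpres: "\<And>x0 x1 \<eta>. x0 \<in> topspace (Dpow \<zeta>) \<Longrightarrow> x1 \<in> topspace (Dpow \<zeta>) \<Longrightarrow> \<eta> \<in> Xi \<Longrightarrow> \<eta> \<subseteq> \<zeta> \<Longrightarrow>
       (restrict x0 \<eta> = restrict x1 \<eta> \<longleftrightarrow> restrict (H x0) \<eta> = restrict (H x1) \<eta>)"
    and Hc: "continuous_map (Dpow \<zeta>) (Dpow \<zeta>) H" and Himg: "H ` topspace (Dpow \<zeta>) = U"
    and Usub: "U \<subseteq> topspace (Dpow \<zeta>)"
    using IPS_D[OF U[folded \<zeta>_def]] by metis
  have iz: "i \<in> \<zeta>" unfolding \<zeta>_def below_eq_def using i by simp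
  have zeq: "\<zeta> = insert i (below i)" unfolding \<zeta>_def using below_eq_insert[OF i] .
  have bsub: "below i \<subseteq> \<zeta>" using zeq by auto
  have zXi: "\<zeta> \<in> Xi" unfolding \<zeta>_def using below_eq_Xi[OF i] .
  have bXi: "below i \<in> Xi" using below_Xi[OF i] .
  have upd_top: "x(i := y) \<in> topspace (Dpow \<zeta>)" if "x \<in> topspace (Dpow \<zeta>)" for x y
    using that iz by (auto simp: topspace_Dpow PiE_iff extensional_def)
  have restr_below: "restrict (H (x(i := y))) (below i) = restrict (H x) (below i)"
    if x: "x \<in> topspace (Dpow \<zeta>)" for x y
  proof -
    have "restrict (x(i := y)) (below i) = restrict x (below i)"
      using i_notin_below[of i] by (auto simp: restrict_def)
    then show ?thesis using Hpres[OF upd_top[OF x] x bXi bsub] by simp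
  qed
  have inj: "y = y'" if x: "x \<in> topspace (Dpow \<zeta>)" and eq: "H (x(i := y)) i = H (x(i := y')) i" for x y y'
  proof -
    have "restrict (H (x(i := y))) \<zeta> = restrict (H (x(i := y'))) \<zeta>"
    proof
      fix j show "restrict (H (x(i := y))) \<zeta> j = restrict (H (x(i := y'))) \<zeta> j"
      proof (cases "j \<in> below i")
        case True
        have "restrict (H (x(i := y))) (below i) j = restrict (H (x(i := y'))) (below i) j"
          using restr_below[OF x, of y] restr_below[OF x, of y'] by simp
        then show ?thesis using True bsub by (auto simp: restrict_def)
      next
        case False
        then show ?thesis using eq zeq by (auto simp: restrict_def)
      qed
    qed
    then have "restrict (x(i := y)) \<zeta> = restrict (x(i := y')) \<zeta>"
      using Hpres[OF upd_top[OF x] upd_top[OF x] zXi order_refl] by simp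
    then have "restrict (x(i := y)) \<zeta> i = restrict (x(i := y')) \<zeta> i" by simp
    then show ?thesis using iz by simp
  qed
  define ya where "ya a = (\<lambda>n::nat. n = a)" for a :: nat
  define \<psi> where "\<psi> x a = H (x(i := ya a)) i" for x a
  have cont_psi: "continuous_map (Dpow \<zeta>) (discrete_topology UNIV) (\<lambda>x. \<psi> x a n)" for a n
  proof -
    have "continuous_map (Dpow \<zeta>) (Dpow \<zeta>) (H \<circ> (\<lambda>x. x(i := ya a)))"
      using continuous_map_compose[OF cont_upd[OF iz] Hc] .
    from continuous_map_compose[OF this cont_Dpow_bit[OF iz, of n]]
    show ?thesis unfolding \<psi>_def by (simp add: o_def)
  qed
  define Op where "Op m = {x\<in>topspace (Dpow \<zeta>). \<forall>a\<le>N. \<forall>b\<le>N. a \<noteq> b \<longrightarrow> (\<exists>n<m. \<psi> x a n \<noteq> \<psi> x b n)}" for m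
  have "\<exists>m. topspace (Dpow \<zeta>) \<subseteq> Op m"
  proof (rule compact_uniform[OF compact_Dpow])
    fix m
    show "openin (Dpow \<zeta>) (Op m)"
    proof (subst openin_subopen, intro ballI)
      fix x assume x: "x \<in> Op m"
      have xtop: "x \<in> topspace (Dpow \<zeta>)" using x unfolding Op_def mem_Collect_eq by (rule conjunct1)
      have xOp: "\<forall>a\<le>N. \<forall>b\<le>N. a \<noteq> b \<longrightarrow> (\<exists>n<m. \<psi> x a n \<noteq> \<psi> x b n)"
        using x unfolding Op_def mem_Collect_eq by (rule conjunct2)
      define T where "T = {x'' \<in> topspace (Dpow \<zeta>). \<forall>k\<in>{..N} \<times> {..<m}. (\<lambda>k x. \<psi> x (fst k) (snd k)) k x'' = (\<lambda>k x. \<psi> x (fst k) (snd k)) k x}"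
      have Topen: "openin (Dpow \<zeta>) T" unfolding T_def
        by (rule open_agree) (auto intro!: cont_psi)
      have xT: "x \<in> T" using xtop unfolding T_def by simp
      have TOp: "T \<subseteq> Op m"
      proof
        fix x'' assume x'': "x'' \<in> T"
        have x''top: "x'' \<in> topspace (Dpow \<zeta>)" using x'' unfolding T_def by simp
        have agree: "\<forall>a\<le>N. \<forall>n<m. \<psi> x'' a n = \<psi> x a n" using x'' unfolding T_def by auto
        have "\<forall>a\<le>N. \<forall>b\<le>N. a \<noteq> b \<longrightarrow> (\<exists>n<m. \<psi> x'' a n \<noteq> \<psi> x'' b n)"
        proof (intro allI impI)
          fix a b assume ab: "a \<le> N" "b \<le> N" "a \<noteq> b"
          then obtain n where "n < m" "\<psi> x a n \<noteq> \<psi> x b n" using xOp by blast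
          then show "\<exists>n<m. \<psi> x'' a n \<noteq> \<psi> x'' b n" using agree ab by metis
        qed
        then show "x'' \<in> Op m" using x''top unfolding Op_def by simp
      qed
      show "\<exists>T. openin (Dpow \<zeta>) T \<and> x \<in> T \<and> T \<subseteq> Op m" using Topen xT TOp by blast
    qed
  next
    fix m show "Op m \<subseteq> Op (Suc m)"
    proof
      fix x assume x: "x \<in> Op m"
      have xtop: "x \<in> topspace (Dpow \<zeta>)" using x unfolding Op_def mem_Collect_eq by (rule conjunct1)
      have xOp: "\<forall>a\<le>N. \<forall>b\<le>N. a \<noteq> b \<longrightarrow> (\<exists>n<m. \<psi> x a n \<noteq> \<psi> x b n)"
        using x unfolding Op_def mem_Collect_eq by (rule conjunct2)
      have "\<forall>a\<le>N. \<forall>b\<le>N. a \<noteq> b \<longrightarrow> (\<exists>n<Suc m. \<psi> x a n \<noteq> \<psi> x b n)"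
        using xOp less_SucI by blast
      then show "x \<in> Op (Suc m)" using xtop unfolding Op_def by simp
    qed
  next
    fix x assume x: "x \<in> topspace (Dpow \<zeta>)"
    have ex: "\<exists>n. \<psi> x a n \<noteq> \<psi> x b n" if "a \<noteq> b" for a b
    proof (rule ccontr)
      assume "\<not> ?thesis"
      then have "\<psi> x a = \<psi> x b" by auto
      then have "ya a = ya b" using inj[OF x] unfolding \<psi>_def by blast
      then have "ya a a = ya b a" by simp
      then show False using that unfolding ya_def by simp
    qed
    define d where "d p = (LEAST n. \<psi> x (fst p) n \<noteq> \<psi> x (snd p) n)" for p
    define m where "m = Suc (Max (d ` ({..N} \<times> {..N})))"
    have "\<forall>a\<le>N. \<forall>b\<le>N. a \<noteq> b \<longrightarrow> (\<exists>n<m. \<psi> x a n \<noteq> \<psi> x b n)"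
    proof (intro allI impI)
      fix a b assume ab: "a \<le> N" "b \<le> N" "a \<noteq> b"
      have "\<psi> x a (d (a, b)) \<noteq> \<psi> x b (d (a, b))"
        unfolding d_def using LeastI_ex[OF ex[OF ab(3)]] by simp
      moreover have "d (a, b) < m" unfolding m_def using ab
        by (simp add: le_imp_less_Suc)
      ultimately show "\<exists>n<m. \<psi> x a n \<noteq> \<psi> x b n" by blast
    qed
    then have "x \<in> Op m" using x unfolding Op_def by simp
    then show "\<exists>m. x \<in> Op m" by blast
  qed
  then obtain m where m: "topspace (Dpow \<zeta>) \<subseteq> Op m" by blast
  show ?thesis
  proof (intro exI[of _ m] ballI allI impI)
    fix u and Q :: "nat list set" assume u: "u \<in> U" and Q: "finite Q \<and> card Q \<le> N"
    obtain x where x: "x \<in> topspace (Dpow \<zeta>)" and ux: "u = H x" using u Himg by blast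
    define pf where "pf a = map (\<lambda>n. of_bool (\<psi> x a n)::nat) [0..<m]" for a
    have xOp: "\<forall>a\<le>N. \<forall>b\<le>N. a \<noteq> b \<longrightarrow> (\<exists>n<m. \<psi> x a n \<noteq> \<psi> x b n)"
      using m x unfolding Op_def by blast
    have injpf: "inj_on pf {..N}"
    proof (rule inj_onI)
      fix a b assume ab: "a \<in> {..N}" "b \<in> {..N}" "pf a = pf b"
      show "a = b"
      proof (rule ccontr)
        assume "a \<noteq> b"
        then obtain n where n: "n < m" "\<psi> x a n \<noteq> \<psi> x b n" using xOp ab by auto
        have "pf a ! n = pf b ! n" using ab(3) by simp
        then show False using n unfolding pf_def by (simp add: of_bool_eq_iff)
      qed
    qed
    show "\<exists>v\<in>U. restrict v (below i) = restrict u (below i) \<and> map (\<lambda>n. of_bool (v i n)::nat) [0..<m] \<notin> Q"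
    proof (rule ccontr)
      assume C: "\<not> ?thesis"
      have "pf a \<in> Q" if "a \<le> N" for a
      proof -
        have "H (x(i := ya a)) \<in> U" using Himg upd_top[OF x] by blast
        moreover have "restrict (H (x(i := ya a))) (below i) = restrict u (below i)"
          using restr_below[OF x] ux by simp
        ultimately have "map (\<lambda>n. of_bool (H (x(i := ya a)) i n)::nat) [0..<m] \<in> Q" using C by blast
        then show ?thesis unfolding pf_def \<psi>_def .
      qed
      then have "pf ` {..N} \<subseteq> Q" by auto
      then have "card (pf ` {..N}) \<le> card Q" using Q by (simp add: card_mono)
      moreover have "card (pf ` {..N}) = Suc N" using injpf by (simp add: card_image)
      ultimately show False using Q by simp
    qed
  qed
qed

lemma IPS_node_two:
  assumes i: "i \<in> Tnodes" and U: "U \<in> IPS (below_eq i)"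
  shows "\<exists>u\<in>U. \<exists>u'\<in>U. u i \<noteq> u' i"
proof -
  define \<zeta> where "\<zeta> = below_eq i"
  obtain H where Hpres: "\<And>x0 x1 \<eta>. x0 \<in> topspace (Dpow \<zeta>) \<Longrightarrow> x1 \<in> topspace (Dpow \<zeta>) \<Longrightarrow> \<eta> \<in> Xi \<Longrightarrow> \<eta> \<subseteq> \<zeta> \<Longrightarrow>
       (restrict x0 \<eta> = restrict x1 \<eta> \<longleftrightarrow> restrict (H x0) \<eta> = restrict (H x1) \<eta>)"
    and Himg: "H ` topspace (Dpow \<zeta>) = U"
    using IPS_D[OF U[folded \<zeta>_def]] by metis
  have iz: "i \<in> \<zeta>" unfolding \<zeta>_def below_eq_def using i by simp
  have zeq: "\<zeta> = insert i (below i)" unfolding \<zeta>_def using below_eq_insert[OF i] .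
  have bsub: "below i \<subseteq> \<zeta>" using zeq by auto
  have zXi: "\<zeta> \<in> Xi" unfolding \<zeta>_def using below_eq_Xi[OF i] .
  have bXi: "below i \<in> Xi" using below_Xi[OF i] .
  define x where "x = (\<lambda>j\<in>\<zeta>. (\<lambda>n::nat. False))"
  have x: "x \<in> topspace (Dpow \<zeta>)" unfolding x_def by (simp add: topspace_Dpow)
  have upd_top: "x(i := y) \<in> topspace (Dpow \<zeta>)" for y
    using x iz by (auto simp: topspace_Dpow PiE_iff extensional_def)
  have restr_below: "restrict (H (x(i := y))) (below i) = restrict (H x) (below i)" for y
  proof -
    have "restrict (x(i := y)) (below i) = restrict x (below i)"
      using i_notin_below[of i] by (auto simp: restrict_def)
    then show ?thesis using Hpres[OF upd_top x bXi bsub] by simp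
  qed
  have inj: "y = y'" if eq: "H (x(i := y)) i = H (x(i := y')) i" for y y'
  proof -
    have "restrict (H (x(i := y))) \<zeta> = restrict (H (x(i := y'))) \<zeta>"
    proof
      fix j show "restrict (H (x(i := y))) \<zeta> j = restrict (H (x(i := y'))) \<zeta> j"
      proof (cases "j \<in> below i")
        case True
        have "restrict (H (x(i := y))) (below i) j = restrict (H (x(i := y'))) (below i) j"
          using restr_below[of y] restr_below[of y'] by simp
        then show ?thesis using True bsub by (auto simp: restrict_def)
      next
        case False
        then show ?thesis using eq zeq by (auto simp: restrict_def)
      qed
    qed
    then have "restrict (x(i := y)) \<zeta> = restrict (x(i := y')) \<zeta>"
      using Hpres[OF upd_top upd_top zXi order_refl] by simp
    then have "restrict (x(i := y)) \<zeta> i = restrict (x(i := y')) \<zeta> i" by simp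
    then show ?thesis using iz by simp
  qed
  have "H (x(i := (\<lambda>_. True))) i \<noteq> H (x(i := (\<lambda>_. False))) i"
  proof
    assume "H (x(i := (\<lambda>_. True))) i = H (x(i := (\<lambda>_. False))) i"
    then have "(\<lambda>_::nat. True) = (\<lambda>_. False)" by (rule inj)
    then show False by (metis)
  qed
  moreover have "H (x(i := y)) \<in> U" for y using Himg upd_top by blast
  ultimately show ?thesis by blast
qed

lemma IPS_node_unique:
  assumes "i \<in> Tnodes" "i' \<in> Tnodes" "U \<in> IPS (below_eq i)" "U \<in> IPS (below_eq i')"
  shows "i = i'"
proof -
  have aux: False if a1: "a \<in> Tnodes" and a2: "U \<in> IPS (below_eq a)" and a3: "U \<in> IPS (below_eq b)" and a4: "a \<notin> below_eq b" for a b
  proof -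
    obtain u u' where uu: "u \<in> U" "u' \<in> U" "u a \<noteq> u' a" using IPS_node_two[OF a1 a2] by blast
    have "U \<subseteq> topspace (Dpow (below_eq b))" using a3 unfolding IPS_def by blast
    then have "u a = undefined" "u' a = undefined" using uu a4 by (auto simp: topspace_Dpow PiE_iff extensional_def)
    then show False using uu by simp
  qed
  show ?thesis
  proof (rule ccontr)
    assume ne: "i \<noteq> i'"
    have "i \<notin> below_eq i' \<or> i' \<notin> below_eq i"
      using ne unfolding below_eq_def by (auto dest: prefix_order.antisym)
    then show False using aux assms by metis
  qed
qed

lemma clopen_prefix:
  assumes "i \<in> \<zeta>" "U \<subseteq> topspace (Dpow \<zeta>)"
  shows "openin (subtopology (Dpow \<zeta>) U) {v\<in>U. map (\<lambda>n. of_bool (v i n)::nat) [0..<m] \<in> Q}"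
proof (subst openin_subopen, intro ballI)
  fix v assume v: "v \<in> {v\<in>U. map (\<lambda>n. of_bool (v i n)::nat) [0..<m] \<in> Q}"
  have tU: "topspace (subtopology (Dpow \<zeta>) U) = U" using assms(2) by auto
  define T where "T = {v' \<in> topspace (subtopology (Dpow \<zeta>) U). \<forall>n\<in>{..<m}. (\<lambda>n v. v i n) n v' = (\<lambda>n v. v i n) n v}"
  have "openin (subtopology (Dpow \<zeta>) U) T" unfolding T_def
    by (rule open_agree) (auto intro!: continuous_map_from_subtopology cont_Dpow_bit assms(1))
  moreover have "v \<in> T" using v tU unfolding T_def by simp
  moreover have "T \<subseteq> {v\<in>U. map (\<lambda>n. of_bool (v i n)::nat) [0..<m] \<in> Q}"
  proof
    fix v' assume v': "v' \<in> T"
    have agree: "\<forall>n<m. v' i n = v i n" using v' unfolding T_def by simp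
    have eq: "map (\<lambda>n. of_bool (v' i n)::nat) [0..<m] = map (\<lambda>n. of_bool (v i n)::nat) [0..<m]"
      by (rule map_cong[OF refl]) (use agree in auto)
    have "map (\<lambda>n. of_bool (v i n)::nat) [0..<m] \<in> Q" using v by simp
    then have "map (\<lambda>n. of_bool (v' i n)::nat) [0..<m] \<in> Q" unfolding eq .
    moreover have "v' \<in> U" using v' tU unfolding T_def by simp
    ultimately show "v' \<in> {v\<in>U. map (\<lambda>n. of_bool (v i n)::nat) [0..<m] \<in> Q}" by simp
  qed
  ultimately show "\<exists>T. openin (subtopology (Dpow \<zeta>) U) T \<and> v \<in> T \<and> T \<subseteq> {v\<in>U. map (\<lambda>n. of_bool (v i n)::nat) [0..<m] \<in> Q}"
    by blast
qed

lemma avoid_lemma: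
  assumes i: "i \<in> Tnodes" and U: "U \<in> IPS (below_eq i)"
    and fib: "\<forall>u\<in>U. \<forall>Q. finite Q \<and> card Q \<le> N \<longrightarrow>
     (\<exists>v\<in>U. restrict v (below i) = restrict u (below i) \<and> map (\<lambda>n. of_bool (v i n)::nat) [0..<m] \<notin> Q)"
    and S: "finite ((\<lambda>s. map s [0..<m]) ` S)" "card ((\<lambda>s. map s [0..<m]) ` S) \<le> N"
  shows "avoidable S U i"
proof -
  define PS where "PS = (\<lambda>s. map s [0..<m]) ` S"
  define V where "V = {v\<in>U. map (\<lambda>n. of_bool (v i n)::nat) [0..<m] \<in> - PS}"
  have iz: "i \<in> below_eq i" unfolding below_eq_def using i by simp
  have Usub: "U \<subseteq> topspace (Dpow (below_eq i))" using U unfolding IPS_def by blast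
  have tU: "topspace (subtopology (Dpow (below_eq i)) U) = U" using Usub by auto
  have "openin (subtopology (Dpow (below_eq i)) U) V"
    unfolding V_def by (rule clopen_prefix[OF iz Usub])
  moreover have "closedin (subtopology (Dpow (below_eq i)) U) V"
  proof -
    have "topspace (subtopology (Dpow (below_eq i)) U) - V = {v\<in>U. map (\<lambda>n. of_bool (v i n)::nat) [0..<m] \<in> PS}"
      unfolding V_def tU by auto
    moreover have "openin (subtopology (Dpow (below_eq i)) U) {v\<in>U. map (\<lambda>n. of_bool (v i n)::nat) [0..<m] \<in> PS}"
      by (rule clopen_prefix[OF iz Usub])
    ultimately show ?thesis unfolding closedin_def V_def tU by auto
  qed
  moreover have "(\<lambda>v. restrict v (below i)) ` V = (\<lambda>u. restrict u (below i)) ` U"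
  proof
    show "(\<lambda>v. restrict v (below i)) ` V \<subseteq> (\<lambda>u. restrict u (below i)) ` U" unfolding V_def by auto
  next
    show "(\<lambda>u. restrict u (below i)) ` U \<subseteq> (\<lambda>v. restrict v (below i)) ` V"
    proof
      fix w assume "w \<in> (\<lambda>u. restrict u (below i)) ` U"
      then obtain u where u: "u \<in> U" "w = restrict u (below i)" by blast
      obtain v where v: "v \<in> U" "restrict v (below i) = restrict u (below i)" "map (\<lambda>n. of_bool (v i n)::nat) [0..<m] \<notin> PS"
        using fib u(1) S unfolding PS_def by blast
      then have "v \<in> V" unfolding V_def by simp
      moreover have "w = restrict v (below i)" using u v by simp
      ultimately show "w \<in> (\<lambda>v. restrict v (below i)) ` V" by blast
    qed
  qed
  moreover have "S \<inter> proj_at V i = {}"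
  proof (rule ccontr)
    assume "S \<inter> proj_at V i \<noteq> {}"
    then obtain v where v: "v \<in> V" "(\<lambda>n. of_bool (v i n)::nat) \<in> S" unfolding proj_at_def by blast
    then have "map (\<lambda>n. of_bool (v i n)::nat) [0..<m] \<in> PS" unfolding PS_def by blast
    then show False using v(1) unfolding V_def by simp
  qed
  moreover have "V \<subseteq> U" unfolding V_def by auto
  ultimately show ?thesis unfolding avoidable_def by blast
qed

lemma card_factor:
  assumes "\<forall>x\<in>A. \<forall>y\<in>A. r x = r y \<longrightarrow> f x = f y" "finite (r ` A)"
  shows "finite (f ` A) \<and> card (f ` A) \<le> card (r ` A)"
proof -
  define h where "h z = f (SOME x. x \<in> A \<and> r x = z)" for z
  have "f ` A = h ` (r ` A)"
  proof (intro set_eqI iffI)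
    fix w assume "w \<in> f ` A"
    then obtain x where x: "x \<in> A" "w = f x" by blast
    have "(SOME y. y \<in> A \<and> r y = r x) \<in> A \<and> r (SOME y. y \<in> A \<and> r y = r x) = r x"
      by (rule someI[of _ x]) (use x in simp)
    then have "h (r x) = f x" unfolding h_def using assms(1) x by metis
    then have "w = h (r x)" using x by simp
    then show "w \<in> h ` (r ` A)" using x by blast
  next
    fix w assume "w \<in> h ` (r ` A)"
    then obtain x where x: "x \<in> A" "w = h (r x)" by blast
    have "(SOME y. y \<in> A \<and> r y = r x) \<in> A \<and> r (SOME y. y \<in> A \<and> r y = r x) = r x"
      by (rule someI[of _ x]) (use x in simp)
    then have "h (r x) = f x" unfolding h_def using assms(1) x by metis
    then show "w \<in> f ` A" using x by simp
  qed
  then show ?thesis using assms(2) by (simp add: card_image_le)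
qed

lemma restrict_eq_iff: "restrict a \<eta> = restrict b \<eta> \<longleftrightarrow> (\<forall>j\<in>\<eta>. a j = b j)"
  by (auto simp: restrict_def fun_eq_iff)

theorem theorem3p18:
  fixes \<xi> :: "'o::wellorder list set"
    and X :: "('o list \<Rightarrow> nat \<Rightarrow> bool) set"
    and F :: "('o list \<Rightarrow> nat \<Rightarrow> bool) \<Rightarrow> (nat \<Rightarrow> nat)"
    and \<U> :: "('o list \<Rightarrow> nat \<Rightarrow> bool) set set"
  assumes omega1_uncountable: "uncountable (UNIV :: 'o set)"
    and omega1_segments: "\<forall>a::'o. countable {b. b < a}"
    and "\<xi> \<in> Xi"
    and "X \<in> IPS \<xi>"
    and "continuous_map (Dpow \<xi>) baire_top F"
    and "countable \<U>"
    and "\<U> \<subseteq> (\<Union>i\<in>Tnodes. IPS (below_eq i))"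
  shows "\<exists>Y\<in>IPS \<xi>. Y \<subseteq> X \<and>
           (\<forall>i\<in>Tnodes. \<forall>U\<in>IPS (below_eq i) \<inter> \<U>. avoidable (F ` Y) U i)"
proof (cases "\<U> = {}")
  case True
  then show ?thesis using assms(4) by blast
next
  case False
  have cnt: "countable \<xi>" using assms(3) unfolding Xi_def by simp
  obtain H where Hh: "homeomorphic_map (Dpow \<xi>) (subtopology (Dpow \<xi>) X) H"
    and Hpres: "\<And>x0 x1 \<eta>. x0 \<in> topspace (Dpow \<xi>) \<Longrightarrow> x1 \<in> topspace (Dpow \<xi>) \<Longrightarrow> \<eta> \<in> Xi \<Longrightarrow> \<eta> \<subseteq> \<xi> \<Longrightarrow>
       (restrict x0 \<eta> = restrict x1 \<eta> \<longleftrightarrow> restrict (H x0) \<eta> = restrict (H x1) \<eta>)"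
    and Hc: "continuous_map (Dpow \<xi>) (Dpow \<xi>) H" and Himg: "H ` topspace (Dpow \<xi>) = X"
    and Xsub: "X \<subseteq> topspace (Dpow \<xi>)"
    using IPS_D[OF assms(4)] by metis
  define Uk where "Uk k = from_nat_into \<U> k" for k
  have Uk_in: "Uk k \<in> \<U>" for k unfolding Uk_def using False by (rule from_nat_into)
  have "\<forall>k. \<exists>i. i \<in> Tnodes \<and> Uk k \<in> IPS (below_eq i)" using assms(7) Uk_in by blast
  then obtain ik where ik: "\<And>k. ik k \<in> Tnodes" "\<And>k. Uk k \<in> IPS (below_eq (ik k))" by metis
  have "\<forall>k. \<exists>m. \<forall>u\<in>Uk k. \<forall>Q. finite Q \<and> card Q \<le> 2^k \<longrightarrow>
     (\<exists>v\<in>Uk k. restrict v (below (ik k)) = restrict u (below (ik k)) \<and> map (\<lambda>n. of_bool (v (ik k) n)::nat) [0..<m] \<notin> Q)"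
    using fiber_lemma[OF ik(1) ik(2)] by blast
  then obtain L where L: "\<And>k. \<forall>u\<in>Uk k. \<forall>Q. finite Q \<and> card Q \<le> 2^k \<longrightarrow>
     (\<exists>v\<in>Uk k. restrict v (below (ik k)) = restrict u (below (ik k)) \<and> map (\<lambda>n. of_bool (v (ik k) n)::nat) [0..<L k] \<notin> Q)"
    by metis
  define \<Phi> where "\<Phi> x = F (H x)" for x
  have \<Phi>c: "continuous_map (Dpow \<xi>) (discrete_topology UNIV) (\<lambda>x. \<Phi> x n)" for n
    using continuous_map_compose[OF continuous_map_compose[OF Hc assms(5)] cont_baire_bit[of n]]
    by (simp add: \<Phi>_def o_def)
  have "\<forall>k. \<exists>B. \<forall>x\<in>topspace (Dpow \<xi>). \<forall>x'\<in>topspace (Dpow \<xi>).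
            (\<forall>j\<in>\<xi>. \<forall>b\<le>B. x' j b = x j b) \<longrightarrow> (\<forall>n<L k. \<Phi> x' n = \<Phi> x n)"
    by (intro allI uniform_Dpow[OF cnt \<Phi>c])
  then obtain Bd where Bd: "\<And>k. \<forall>x\<in>topspace (Dpow \<xi>). \<forall>x'\<in>topspace (Dpow \<xi>).
            (\<forall>j\<in>\<xi>. \<forall>b\<le>Bd k. x' j b = x j b) \<longrightarrow> (\<forall>n<L k. \<Phi> x' n = \<Phi> x n)"
    by metis
  define \<sigma> where "\<sigma> c = (\<Sum>c'\<le>c. Bd c') + c + 1" for c
  have \<sigma>_mono: "strict_mono \<sigma>"
    by (rule strict_mono_Suc_iff[THEN iffD2]) (simp add: \<sigma>_def)
  have \<sigma>inj: "inj \<sigma>" using \<sigma>_mono by (rule strict_mono_imp_inj_on)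
  have \<sigma>_big: "Bd K < \<sigma> c" if "K \<le> c" for K c
  proof -
    have "Bd K \<le> (\<Sum>c'\<le>c. Bd c')" using that by (intro member_le_sum) auto
    then show ?thesis unfolding \<sigma>_def by simp
  qed
  define idx where "idx = to_nat_on \<xi>"
  have idxinj: "inj_on idx \<xi>" unfolding idx_def using cnt by (rule inj_on_to_nat_on)
  define g where "g j y b = (if b \<in> range \<sigma> \<and> fst (prod_decode (inv \<sigma> b)) = idx j
      then y (snd (prod_decode (inv \<sigma> b))) else False)" for j and y :: "nat \<Rightarrow> bool" and b
  define G where "G x = (\<lambda>j\<in>\<xi>. g j (x j))" for x :: "'o list \<Rightarrow> nat \<Rightarrow> bool"
  have g_at: "g j y (\<sigma> (prod_encode (idx j, k))) = y k" for j y k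
    unfolding g_def using inv_f_f[OF \<sigma>inj] by simp
  have g_inj: "y = y'" if "g j y = g j y'" for j y y'
  proof
    fix k show "y k = y' k" using fun_cong[OF that, of "\<sigma> (prod_encode (idx j, k))"] g_at by simp
  qed
  have G_top: "G x \<in> topspace (Dpow \<xi>)" for x
    by (simp add: G_def topspace_Dpow)
  have G_cont: "continuous_map (Dpow \<xi>) (Dpow \<xi>) G"
  proof -
    have gc: "continuous_map (Dpow \<xi>) cantor_top (\<lambda>x. g j (x j))" if j: "j \<in> \<xi>" for j
      unfolding cantor_top_def continuous_map_componentwise_UNIV
    proof
      fix b
      show "continuous_map (Dpow \<xi>) (discrete_topology UNIV) (\<lambda>x. g j (x j) b)"
      proof (cases "b \<in> range \<sigma> \<and> fst (prod_decode (inv \<sigma> b)) = idx j")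
        case True
        then show ?thesis unfolding g_def using cont_Dpow_bit[OF j] by simp
      next
        case False
        show ?thesis unfolding g_def if_not_P[OF False] by simp
      qed
    qed
    have "continuous_map (Dpow \<xi>) (product_topology (\<lambda>_. cantor_top) \<xi>) G"
      unfolding continuous_map_componentwise
    proof (intro conjI ballI)
      show "G ` topspace (Dpow \<xi>) \<subseteq> extensional \<xi>" by (auto simp: G_def)
    next
      fix j assume j: "j \<in> \<xi>"
      have "(\<lambda>x. G x j) = (\<lambda>x. g j (x j))" using j by (simp add: G_def)
      then show "continuous_map (Dpow \<xi>) cantor_top (\<lambda>x. G x j)" using gc[OF j] by simp
    qed
    then show ?thesis by (simp add: Dpow_def)
  qed
  have G_pres: "restrict x0 \<eta> = restrict x1 \<eta> \<longleftrightarrow> restrict (G x0) \<eta> = restrict (G x1) \<eta>"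
    if "\<eta> \<subseteq> \<xi>" for x0 x1 \<eta>
  proof -
    have "(\<forall>j\<in>\<eta>. x0 j = x1 j) \<longleftrightarrow> (\<forall>j\<in>\<eta>. G x0 j = G x1 j)"
    proof
      assume "\<forall>j\<in>\<eta>. x0 j = x1 j" then show "\<forall>j\<in>\<eta>. G x0 j = G x1 j" by (simp add: G_def)
    next
      assume a: "\<forall>j\<in>\<eta>. G x0 j = G x1 j"
      show "\<forall>j\<in>\<eta>. x0 j = x1 j"
      proof
        fix j assume j\<eta>: "j \<in> \<eta>"
        then have j\<xi>: "j \<in> \<xi>" using that by blast
        have "G x0 j = G x1 j" using a j\<eta> by blast
        then have "g j (x0 j) = g j (x1 j)" using j\<xi> by (simp add: G_def)
        then show "x0 j = x1 j" by (rule g_inj)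
      qed
    qed
    then show ?thesis by (simp add: restrict_eq_iff)
  qed
  have G_inj: "inj_on G (topspace (Dpow \<xi>))"
  proof (rule inj_onI)
    fix x0 x1 assume x: "x0 \<in> topspace (Dpow \<xi>)" "x1 \<in> topspace (Dpow \<xi>)" "G x0 = G x1"
    then have "restrict x0 \<xi> = restrict x1 \<xi>" using G_pres[of \<xi> x0 x1] by simp
    moreover have "restrict x0 \<xi> = x0" "restrict x1 \<xi> = x1" using x(1,2)
      by (simp_all add: topspace_Dpow PiE_restrict)
    ultimately show "x0 = x1" by simp
  qed
  define Y where "Y = (H \<circ> G) ` topspace (Dpow \<xi>)"
  have Ysub: "Y \<subseteq> X" unfolding Y_def using Himg G_top by auto
  have YIPS: "Y \<in> IPS \<xi>"
    unfolding IPS_def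
  proof (intro CollectI conjI exI[of _ "H \<circ> G"] ballI impI)
    show "Y \<subseteq> topspace (Dpow \<xi>)" using Ysub Xsub by simp
    have tY: "topspace (subtopology (Dpow \<xi>) Y) = Y" using Ysub Xsub by auto
    show "homeomorphic_map (Dpow \<xi>) (subtopology (Dpow \<xi>) Y) (H \<circ> G)"
    proof (rule continuous_imp_homeomorphic_map)
      show "continuous_map (Dpow \<xi>) (subtopology (Dpow \<xi>) Y) (H \<circ> G)"
        unfolding continuous_map_in_subtopology
        using continuous_map_compose[OF G_cont Hc] by (auto simp: Y_def)
      show "compact_space (Dpow \<xi>)" by (rule compact_Dpow)
      show "Hausdorff_space (subtopology (Dpow \<xi>) Y)" by (rule Hausdorff_space_subtopology[OF Hausdorff_Dpow])
      show "(H \<circ> G) ` topspace (Dpow \<xi>) = topspace (subtopology (Dpow \<xi>) Y)" using tY Y_def by simp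
      have "inj_on H (topspace (Dpow \<xi>))" by (rule homeomorphic_imp_injective_map[OF Hh])
      then have "inj_on H (G ` topspace (Dpow \<xi>))" by (rule inj_on_subset) (use G_top in auto)
      then show "inj_on (H \<circ> G) (topspace (Dpow \<xi>))" using G_inj by (simp add: comp_inj_on)
    qed
  next
    fix x0 x1 \<eta> assume x: "x0 \<in> topspace (Dpow \<xi>)" "x1 \<in> topspace (Dpow \<xi>)" "\<eta> \<in> Xi" "\<eta> \<subseteq> \<xi>"
    show "(restrict x0 \<eta> = restrict x1 \<eta>) = (restrict ((H \<circ> G) x0) \<eta> = restrict ((H \<circ> G) x1) \<eta>)"
      using G_pres[OF x(4), of x0 x1] Hpres[OF G_top G_top x(3,4), of x0 x1] by simp
  qed
  have count: "finite ((\<lambda>s. map s [0..<L k]) ` (F ` Y)) \<and> card ((\<lambda>s. map s [0..<L k]) ` (F ` Y)) \<le> 2^k" for k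
  proof -
    have eqS: "(\<lambda>s. map s [0..<L k]) ` (F ` Y) = (\<lambda>x. map (\<Phi> (G x)) [0..<L k]) ` topspace (Dpow \<xi>)"
      by (simp add: Y_def \<Phi>_def image_image)
    define r where "r x = (\<lambda>c\<in>{..<k}. if \<exists>j\<in>\<xi>. idx j = fst (prod_decode c)
        then x (SOME j. j \<in> \<xi> \<and> idx j = fst (prod_decode c)) (snd (prod_decode c)) else False)"
      for x :: "'o list \<Rightarrow> nat \<Rightarrow> bool"
    have rsub: "r ` topspace (Dpow \<xi>) \<subseteq> PiE {..<k} (\<lambda>_. UNIV)" by (auto simp: r_def)
    have finP: "finite (PiE {..<k} (\<lambda>_::nat. UNIV::bool set))" by (simp add: finite_PiE)
    have cardP: "card (PiE {..<k} (\<lambda>_::nat. UNIV::bool set)) = 2^k" by (simp add: card_PiE)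
    have factor: "\<forall>x\<in>topspace (Dpow \<xi>). \<forall>x'\<in>topspace (Dpow \<xi>). r x = r x' \<longrightarrow>
        map (\<Phi> (G x)) [0..<L k] = map (\<Phi> (G x')) [0..<L k]"
    proof (intro ballI impI)
      fix x x' assume x: "x \<in> topspace (Dpow \<xi>)" "x' \<in> topspace (Dpow \<xi>)" and rr: "r x = r x'"
      have agree: "\<forall>j\<in>\<xi>. \<forall>b\<le>Bd k. G x' j b = G x j b"
      proof (intro ballI allI impI)
        fix j b assume j: "j \<in> \<xi>" and b: "b \<le> Bd k"
        show "G x' j b = G x j b"
        proof (cases "b \<in> range \<sigma> \<and> fst (prod_decode (inv \<sigma> b)) = idx j")
          case True
          define c where "c = inv \<sigma> b"
          have bc: "\<sigma> c = b" unfolding c_def using True by (simp add: f_inv_into_f)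
          have ck: "c < k"
          proof (rule ccontr)
            assume "\<not> c < k"
            then have "Bd k < \<sigma> c" using \<sigma>_big by simp
            then show False using bc b by simp
          qed
          have fc: "fst (prod_decode c) = idx j" using True c_def by simp
          have some: "(SOME j'. j' \<in> \<xi> \<and> idx j' = fst (prod_decode c)) = j"
          proof -
            have "(SOME j'. j' \<in> \<xi> \<and> idx j' = fst (prod_decode c)) \<in> \<xi> \<and> idx (SOME j'. j' \<in> \<xi> \<and> idx j' = fst (prod_decode c)) = fst (prod_decode c)"
              by (rule someI[of _ j]) (use j fc in simp)
            then show ?thesis using idxinj j fc by (metis inj_on_def)
          qed
          have ex: "\<exists>j'\<in>\<xi>. idx j' = fst (prod_decode c)" using j fc by auto
          have rc: "r y c = y j (snd (prod_decode c))" for y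
          proof -
            have "r y c = y (SOME j'. j' \<in> \<xi> \<and> idx j' = fst (prod_decode c)) (snd (prod_decode c))"
              unfolding r_def using ck ex by simp
            then show ?thesis unfolding some .
          qed
          have "r x c = r x' c" using rr by simp
          then have "x j (snd (prod_decode c)) = x' j (snd (prod_decode c))"
            unfolding rc .
          then show ?thesis using True j unfolding G_def g_def c_def by simp
        next
          case False
          have gF: "g j y b = False" for y unfolding g_def if_not_P[OF False] ..
          show ?thesis using j by (simp add: G_def gF)
        qed
      qed
      have "\<forall>n<L k. \<Phi> (G x') n = \<Phi> (G x) n" using Bd[of k] G_top agree by blast
      then show "map (\<Phi> (G x)) [0..<L k] = map (\<Phi> (G x')) [0..<L k]" by simp
    qed
    have finr: "finite (r ` topspace (Dpow \<xi>))" using rsub finP finite_subset by blast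
    have "card (r ` topspace (Dpow \<xi>)) \<le> 2^k" using rsub finP cardP card_mono by metis
    then show ?thesis using card_factor[OF factor finr] eqS by simp
  qed
  show ?thesis
  proof (intro bexI[OF _ YIPS] conjI Ysub ballI)
    fix i U assume i: "i \<in> Tnodes" and U: "U \<in> IPS (below_eq i) \<inter> \<U>"
    define k where "k = to_nat_on \<U> U"
    have Uk: "Uk k = U" unfolding Uk_def k_def using assms(6) U by simp
    have ii: "ik k = i" using IPS_node_unique[OF ik(1)[of k] i] ik(2)[of k] U Uk by simp
    show "avoidable (F ` Y) U i"
      by (rule avoid_lemma[OF i _ _ count[THEN conjunct1] count[THEN conjunct2]])
        (use U L[of k] Uk ii in auto)
  qed
qed

end
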